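(* Let $G=(N,E)$ and $G'=(N,E')$ be DAGs with $\mathcal{P}^{G'}\supseteq\mathcal{P}^G$, $G'\supseteq G^*$, and $|\mathrm{roots}(G)|=1$, and let $\mathcal{O}'$ be a topological ordering of $G'$. Let $r,u,v\in N$ with $\mathcal{O}'(v)<\mathcal{O}'(u)<\mathcal{O}'(r)$ and $(r,v)\in E$. Then $(v,u)\in E'$.
   Context: DAG: finite directed graph without directed cycles; $\mathrm{pa}_G(s)$ = parents of $s$; $\mathrm{roots}(G)=\{s:\mathrm{pa}_G(s)=\emptyset\}$. $G^*=(N,E^* )$ with $E^*=\{(t,s):(s,t)\in E\}$; $G'\supseteq G^*$ means $E'\supseteq E^*$. A topological ordering of $G'$ is a bijection $\mathcal{O}':N\to\{1,\dots,|N|\}$ with $(s,t)\in E'\Rightarrow\mathcal{O}'(s)<\mathcal{O}'(t)$. Each node $s$ has a state space $\mathsf{X}_s$ (finite set with counting measure, or finite-dimensional real vector space with Lebesgue measure $\mu_s$), $\mu=\otimes_s\mu_s$; $\mathcal{P}^G$ is the set of probability distributions on $\times_s\mathsf{X}_s$ with $\mu$-density $p(x)=\prod_{s}k^s(x_s\mid x_{\mathrm{pa}_G(s)})$ for some nonnegative measurable $k^s$ with $\int k^s(x_s\mid x_{\mathrm{pa}_G(s)})\,d\mu_s(x_s)=1$. *)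

theory Defs
  imports "HOL-Probability.Probability"
begin

definition is_DAG :: "'n set \<Rightarrow> ('n \<times> 'n) set \<Rightarrow> bool" where
  "is_DAG N E \<longleftrightarrow> finite N \<and> E \<subseteq> N \<times> N \<and> acyclic E"

definition pa :: "('n \<times> 'n) set \<Rightarrow> 'n \<Rightarrow> 'n set" where
  "pa E s = {t. (t, s) \<in> E}"

definition roots :: "'n set \<Rightarrow> ('n \<times> 'n) set \<Rightarrow> 'n set" where
  "roots N E = {s \<in> N. pa E s = {}}"

definition topo_order :: "'n set \<Rightarrow> ('n \<times> 'n) set \<Rightarrow> ('n \<Rightarrow> nat) \<Rightarrow> bool" where
  "topo_order N E ord \<longleftrightarrow> bij_betw ord N {1..card N} \<and> (\<forall>(s,t)\<in>E. ord s < ord t)"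

text \<open>State spaces: each node carries either a finite set (at least two points) with
  counting measure, or R^d (d >= 1) with Lebesgue measure, realised as the product of
  d copies of lborel on extensional functions nat => real.\<close>
definition valid_state_spaces :: "'n set \<Rightarrow> ('n \<Rightarrow> (nat \<Rightarrow> real) measure) \<Rightarrow> bool" where
  "valid_state_spaces N M \<longleftrightarrow>
     (\<forall>s\<in>N. (\<exists>A. finite A \<and> card A \<ge> 2 \<and> M s = count_space A)
           \<or> (\<exists>d\<ge>1. M s = (\<Pi>\<^sub>M i\<in>{..<d}. lborel)))"

definition Pfam :: "'n set \<Rightarrow> ('n \<times> 'n) set \<Rightarrow> ('n \<Rightarrow> 'a measure) \<Rightarrow> ('n \<Rightarrow> 'a) measure set" where
  "Pfam N E M = {P. prob_space P \<and>
     (\<exists>k :: 'n \<Rightarrow> 'a \<Rightarrow> ('n \<Rightarrow> 'a) \<Rightarrow> real.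
        (\<forall>s\<in>N. (\<lambda>(y, z). k s y z) \<in> borel_measurable (M s \<Otimes>\<^sub>M (\<Pi>\<^sub>M t\<in>pa E s. M t))
              \<and> (\<forall>y z. 0 \<le> k s y z)
              \<and> (\<forall>z\<in>space (\<Pi>\<^sub>M t\<in>pa E s. M t). (\<integral>\<^sup>+ y. ennreal (k s y z) \<partial>M s) = 1))
        \<and> P = density (\<Pi>\<^sub>M s\<in>N. M s)
                 (\<lambda>x. ennreal (\<Prod>s\<in>N. k s (x s) (restrict x (pa E s)))))}"

end

theory Submission
  imports Defs
begin

lemma restrict_upd_notin: "s \<notin> B \<Longrightarrow> restrict (x(s:=y)) B = restrict x B"
  by (auto simp: restrict_def fun_eq_iff)

lemma kern_meas:
  assumes "(\<lambda>(y,z). K y z) \<in> borel_measurable (M t \<Otimes>\<^sub>M PiM P M)" "t \<in> S" "P \<subseteq> S"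
  shows "(\<lambda>x. K (x t) (restrict x P)) \<in> borel_measurable (PiM S M)"
proof -
  have "(\<lambda>x. (x t, restrict x P)) \<in> measurable (PiM S M) (M t \<Otimes>\<^sub>M PiM P M)"
    using assms(2,3) by (intro measurable_Pair measurable_component_singleton measurable_restrict_subset)
  from measurable_compose[OF this assms(1)] show ?thesis by simp
qed

lemma (in product_sigma_finite) marg:
  fixes K :: "'i \<Rightarrow> 'a \<Rightarrow> ('i \<Rightarrow> 'a) \<Rightarrow> ennreal" and ord :: "'i \<Rightarrow> nat"
  assumes "finite S" "A \<subseteq> S"
    and Pa: "\<And>s. s \<in> S \<Longrightarrow> Pa s \<subseteq> S" "\<And>s t. s \<in> S \<Longrightarrow> t \<in> Pa s \<Longrightarrow> ord t < ord s"
    and ordA: "\<And>s t. s \<in> S - A \<Longrightarrow> t \<in> A \<Longrightarrow> ord t < ord s"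
    and Km: "\<And>s. s \<in> S \<Longrightarrow> (\<lambda>(y,z). K s y z) \<in> borel_measurable (M s \<Otimes>\<^sub>M PiM (Pa s) M)"
    and K1: "\<And>s z. s \<in> S \<Longrightarrow> z \<in> space (PiM (Pa s) M) \<Longrightarrow> (\<integral>\<^sup>+ y. K s y z \<partial>M s) = 1"
    and phi: "\<phi> \<in> borel_measurable (PiM A M)"
  shows "(\<integral>\<^sup>+ x. \<phi> (restrict x A) * (\<Prod>s\<in>S. K s (x s) (restrict x (Pa s))) \<partial>PiM S M)
       = (\<integral>\<^sup>+ x. \<phi> (restrict x A) * (\<Prod>s\<in>A. K s (x s) (restrict x (Pa s))) \<partial>PiM A M)"
  using assms
proof (induction "card (S - A)" arbitrary: S)
  case 0
  then have "S = A" by auto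
  then show ?case by simp
next
  case (Suc n)
  then have ne: "S - A \<noteq> {}" by auto
  have fin: "finite (S - A)" using Suc by auto
  define m where "m = Max (ord ` (S - A))"
  have "m \<in> ord ` (S - A)" unfolding m_def using fin ne by (intro Max_in) auto
  then obtain s where s: "s \<in> S - A" "ord s = m" by auto
  have smax: "ord t \<le> ord s" if "t \<in> S - A" for t
    using s that fin unfolding m_def by auto
  have notpa: "s \<notin> Pa t" if "t \<in> S" for t
  proof
    assume st: "s \<in> Pa t"
    then have "ord s < ord t" using Suc.prems(4) that by auto
    moreover have "ord t \<le> ord s \<or> ord t < ord s"
      using smax[of t] Suc.prems(5)[of s t] s that by (cases "t \<in> A") auto
    ultimately show False by auto
  qed
  define S' where "S' = S - {s}"
  have S: "S = insert s S'" "s \<notin> S'" "finite S'" using s Suc.prems(1) unfolding S'_def by auto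
  have PaS': "Pa t \<subseteq> S'" if "t \<in> S'" for t
    using Suc.prems(3)[of t] notpa[of t] that unfolding S'_def by auto
  have "S - {s} - A = (S - A) - {s}" by auto
  then have cardS': "n = card (S - {s} - A)" using Suc.hyps(2) s fin by simp
  have IH: "(\<integral>\<^sup>+ x. \<phi> (restrict x A) * (\<Prod>t\<in>S'. K t (x t) (restrict x (Pa t))) \<partial>PiM S' M)
       = (\<integral>\<^sup>+ x. \<phi> (restrict x A) * (\<Prod>t\<in>A. K t (x t) (restrict x (Pa t))) \<partial>PiM A M)"
    apply (rule Suc.hyps(1))
    using Suc.prems PaS' cardS' s(1) unfolding S'_def by auto
  have meas: "(\<lambda>x. \<phi> (restrict x A) * (\<Prod>t\<in>S. K t (x t) (restrict x (Pa t)))) \<in> borel_measurable (PiM S M)"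
  proof (intro borel_measurable_times_ennreal borel_measurable_prod_ennreal)
    show "(\<lambda>x. \<phi> (restrict x A)) \<in> borel_measurable (PiM S M)"
      using measurable_compose[OF measurable_restrict_subset[OF Suc.prems(2)] phi] by simp
    fix t assume "t \<in> S"
    show "(\<lambda>x. K t (x t) (restrict x (Pa t))) \<in> borel_measurable (PiM S M)"
      by (rule kern_meas[OF Suc.prems(6)[OF \<open>t\<in>S\<close>] \<open>t\<in>S\<close> Suc.prems(3)[OF \<open>t\<in>S\<close>]])
  qed
  have "(\<integral>\<^sup>+ x. \<phi> (restrict x A) * (\<Prod>t\<in>S. K t (x t) (restrict x (Pa t))) \<partial>PiM S M)
     = (\<integral>\<^sup>+ x. (\<integral>\<^sup>+ y. \<phi> (restrict (x(s:=y)) A) * (\<Prod>t\<in>S. K t ((x(s:=y)) t) (restrict (x(s:=y)) (Pa t))) \<partial>M s) \<partial>PiM S' M)"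
    using product_nn_integral_insert[OF S(3,2)] meas S(1) by simp
  also have "\<dots> = (\<integral>\<^sup>+ x. \<phi> (restrict x A) * (\<Prod>t\<in>S'. K t (x t) (restrict x (Pa t))) \<partial>PiM S' M)"
  proof (rule nn_integral_cong)
    fix x assume x: "x \<in> space (PiM S' M)"
    have eq: "\<phi> (restrict (x(s:=y)) A) * (\<Prod>t\<in>S. K t ((x(s:=y)) t) (restrict (x(s:=y)) (Pa t)))
      = (\<phi> (restrict x A) * (\<Prod>t\<in>S'. K t (x t) (restrict x (Pa t)))) * K s y (restrict x (Pa s))" for y
    proof -
      have "(\<Prod>t\<in>S. K t ((x(s:=y)) t) (restrict (x(s:=y)) (Pa t)))
          = K s y (restrict x (Pa s)) * (\<Prod>t\<in>S'. K t ((x(s:=y)) t) (restrict (x(s:=y)) (Pa t)))"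
        using S notpa[of s] s by (simp add: restrict_upd_notin)
      also have "(\<Prod>t\<in>S'. K t ((x(s:=y)) t) (restrict (x(s:=y)) (Pa t))) = (\<Prod>t\<in>S'. K t (x t) (restrict x (Pa t)))"
        using S notpa unfolding S'_def by (intro prod.cong) (auto simp: restrict_upd_notin)
      finally have P: "(\<Prod>t\<in>S. K t ((x(s:=y)) t) (restrict (x(s:=y)) (Pa t)))
          = K s y (restrict x (Pa s)) * (\<Prod>t\<in>S'. K t (x t) (restrict x (Pa t)))" .
      have r: "restrict (x(s:=y)) A = restrict x A" using s by (simp add: restrict_upd_notin)
      show ?thesis by (simp only: r P mult_ac)
    qed
    have zsp: "restrict x (Pa s) \<in> space (PiM (Pa s) M)"
    proof -
      have "Pa s \<subseteq> S'" using Suc.prems(3)[of s] notpa[of s] s unfolding S'_def by auto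
      then show ?thesis using x by (auto simp: space_PiM PiE_iff)
    qed
    have ym: "(\<lambda>y. K s y (restrict x (Pa s))) \<in> borel_measurable (M s)"
      using measurable_Pair_compose_split[OF Suc.prems(6)[of s] measurable_ident measurable_const[OF zsp]] s
      by simp
    show "(\<integral>\<^sup>+ y. \<phi> (restrict (x(s:=y)) A) * (\<Prod>t\<in>S. K t ((x(s:=y)) t) (restrict (x(s:=y)) (Pa t))) \<partial>M s)
      = \<phi> (restrict x A) * (\<Prod>t\<in>S'. K t (x t) (restrict x (Pa t)))"
      unfolding eq using nn_integral_cmult[OF ym] Suc.prems(7)[OF _ zsp] s by simp
  qed
  finally show ?case using IH by simp
qed



lemma (in product_sigma_finite) split2:
  assumes W: "finite W" "u \<notin> W" "v \<notin> W" "u \<noteq> v"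
    and F: "F \<in> borel_measurable (PiM (insert u (insert v W)) M)"
  shows "integral\<^sup>N (PiM (insert u (insert v W)) M) F
    = (\<integral>\<^sup>+ x. (\<integral>\<^sup>+ z. (\<integral>\<^sup>+ y. F (x(v:=z, u:=y)) \<partial>M u) \<partial>M v) \<partial>PiM W M)"
proof -
  have fin: "finite (insert v W)" "u \<notin> insert v W" using W by auto
  have "integral\<^sup>N (PiM (insert u (insert v W)) M) F
     = (\<integral>\<^sup>+ x. (\<integral>\<^sup>+ y. F (x(u:=y)) \<partial>M u) \<partial>PiM (insert v W) M)"
    by (rule product_nn_integral_insert[OF fin F])
  also have "\<dots> = (\<integral>\<^sup>+ x. (\<integral>\<^sup>+ z. (\<integral>\<^sup>+ y. F (x(v:=z, u:=y)) \<partial>M u) \<partial>M v) \<partial>PiM W M)"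
  proof (rule product_nn_integral_insert[OF W(1,3)])
    have "(\<lambda>(x, y). F (x(u := y))) \<in> borel_measurable (PiM (insert v W) M \<Otimes>\<^sub>M M u)"
      using measurable_compose[OF measurable_add_dim F] by (simp add: case_prod_beta split_def)
    then show "(\<lambda>x. \<integral>\<^sup>+ y. F (x(u := y)) \<partial>M u) \<in> borel_measurable (PiM (insert v W) M)"
      by (rule M.borel_measurable_nn_integral[of "\<lambda>x y. F (x(u := y))", simplified])
  qed
  finally show ?thesis .
qed



lemma (in product_sigma_finite) marg_f:
  fixes ord :: "'i \<Rightarrow> nat" and C :: "bool \<Rightarrow> 'i \<Rightarrow> 'a set"
  assumes "finite S" "A \<subseteq> S"
    and ordA: "\<And>s t. s \<in> S - A \<Longrightarrow> t \<in> A \<Longrightarrow> ord t < ord s"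
    and C: "\<And>b s. s \<in> S \<Longrightarrow> C b s \<in> sets (M s)" "\<And>b s. s \<in> S \<Longrightarrow> emeasure (M s) (C b s) = 1"
    and phi: "\<phi> \<in> borel_measurable (PiM A M)"
  shows "(\<integral>\<^sup>+ x. \<phi> (restrict x A) * ((1/2) * ((\<Prod>s\<in>S. indicator (C False s) (x s)) + (\<Prod>s\<in>S. indicator (C True s) (x s)))) \<partial>PiM S M)
       = (\<integral>\<^sup>+ x. \<phi> (restrict x A) * ((1/2) * ((\<Prod>s\<in>A. indicator (C False s) (x s)) + (\<Prod>s\<in>A. indicator (C True s) (x s)))) \<partial>PiM A M)"
proof -
  have one: "(\<integral>\<^sup>+ x. \<phi> (restrict x A) * (\<Prod>s\<in>S. indicator (C b s) (x s)) \<partial>PiM S M)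
       = (\<integral>\<^sup>+ x. \<phi> (restrict x A) * (\<Prod>s\<in>A. indicator (C b s) (x s)) \<partial>PiM A M)" for b
    using marg[of S A "\<lambda>_. {}" ord "\<lambda>s y z. indicator (C b s) y" \<phi>] assms
    by (auto simp: measurable_compose[OF measurable_fst] nn_integral_indicator)
  have mS: "(\<lambda>x. \<phi> (restrict x A)) \<in> borel_measurable (PiM S M)"
    using measurable_compose[OF measurable_restrict_subset[OF assms(2)] phi] by simp
  have mA: "(\<lambda>x. \<phi> (restrict x A)) \<in> borel_measurable (PiM A M)"
    using measurable_compose[OF measurable_restrict_subset[OF order_refl] phi] by simp
  have pS: "(\<lambda>x. \<Prod>s\<in>S. indicator (C b s) (x s) :: ennreal) \<in> borel_measurable (PiM S M)" for b
    using C(1) by (intro borel_measurable_prod_ennreal) auto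
  have pA: "(\<lambda>x. \<Prod>s\<in>A. indicator (C b s) (x s) :: ennreal) \<in> borel_measurable (PiM A M)" for b
    using C(1) assms(2) by (intro borel_measurable_prod_ennreal) auto
  have dist: "p * ((1/2) * (a + b)) = (1/2) * (p * a) + (1/2) * (p * b)" for p a b :: ennreal
    by (simp add: algebra_simps)
  show ?thesis
    unfolding dist
    using mS mA pS pA one
    by (simp add: nn_integral_add nn_integral_cmult)
qed



lemma ind_pair_lemma:
  fixes C :: "bool \<Rightarrow> 'i \<Rightarrow> 'a set"
  assumes "C False u \<inter> C True u = {}" "C False v \<inter> C True v = {}"
  shows "(indicator (C i u) y * indicator (C j v) z :: ennreal) *
     (indicator (C False u) y * indicator (C False v) z + indicator (C True u) y * indicator (C True v) z)
   = (if i = j then indicator (C i u) y * indicator (C i v) z else 0)"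
  using assms by (cases i; cases j) (auto simp: indicator_def)

context product_sigma_finite begin

lemma core:
  fixes N :: "'i set" and Pa :: "'i \<Rightarrow> 'i set" and ord :: "'i \<Rightarrow> nat"
    and k :: "'i \<Rightarrow> 'a \<Rightarrow> ('i \<Rightarrow> 'a) \<Rightarrow> ennreal" and C :: "bool \<Rightarrow> 'i \<Rightarrow> 'a set"
  assumes fin: "finite N" and uv: "u \<in> N" "v \<in> N" "ord v < ord u"
    and Pa: "\<And>s. s \<in> N \<Longrightarrow> Pa s \<subseteq> N" "\<And>s t. s \<in> N \<Longrightarrow> t \<in> Pa s \<Longrightarrow> ord t < ord s"
    and vu: "v \<notin> Pa u"
    and Km: "\<And>s. s \<in> N \<Longrightarrow> (\<lambda>(y,z). k s y z) \<in> borel_measurable (M s \<Otimes>\<^sub>M PiM (Pa s) M)"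
    and K1: "\<And>s z. s \<in> N \<Longrightarrow> z \<in> space (PiM (Pa s) M) \<Longrightarrow> (\<integral>\<^sup>+ y. k s y z \<partial>M s) = 1"
    and C: "\<And>b s. s \<in> N \<Longrightarrow> C b s \<in> sets (M s)" "\<And>b s. s \<in> N \<Longrightarrow> emeasure (M s) (C b s) = 1"
    and Cdisj: "C False u \<inter> C True u = {}" "C False v \<inter> C True v = {}"
    and CW: "\<And>s. s \<in> N \<Longrightarrow> s \<noteq> u \<Longrightarrow> s \<noteq> v \<Longrightarrow> ord s \<le> ord u \<Longrightarrow> C True s = C False s"
    and eq: "density (PiM N M) (\<lambda>x. \<Prod>s\<in>N. k s (x s) (restrict x (Pa s)))
           = density (PiM N M) (\<lambda>x. (1/2) * ((\<Prod>s\<in>N. indicator (C False s) (x s)) + (\<Prod>s\<in>N. indicator (C True s) (x s))))"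
  shows False
proof -
  define A where "A = {s\<in>N. ord s \<le> ord u}"
  define W where "W = A - {u, v}"
  have AN: "A \<subseteq> N" unfolding A_def by auto
  have uvne: "u \<noteq> v" using uv by auto
  have AW: "A = insert u (insert v W)" "u \<notin> W" "v \<notin> W" "finite W" "finite A"
    using uv fin unfolding A_def W_def by auto
  have uA: "u \<in> A" "v \<in> A" "W \<subseteq> A" using AW by auto
  have ordA: "\<And>s t. s \<in> N - A \<Longrightarrow> t \<in> A \<Longrightarrow> ord t < ord s" unfolding A_def by auto
  have PaA: "Pa s \<subseteq> A" if "s \<in> A" for s
    using Pa[of s] that unfolding A_def by fastforce
  have uPa: "u \<notin> Pa s" if "s \<in> A" for s
    using Pa(2)[of s u] that unfolding A_def by auto
  have PaU: "Pa u \<subseteq> W" using PaA[of u] uPa[of u] vu AW unfolding W_def by auto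
  define g where "g = (\<lambda>x. \<Prod>s\<in>N. k s (x s) (restrict x (Pa s)))"
  define f where "f = (\<lambda>x. (1/2) * ((\<Prod>s\<in>N. indicator (C False s) (x s)) + (\<Prod>s\<in>N. indicator (C True s) (x s))) :: ennreal)"
  have gm: "g \<in> borel_measurable (PiM N M)"
    unfolding g_def by (intro borel_measurable_prod_ennreal kern_meas[OF Km] Pa(1)) auto
  have fm: "f \<in> borel_measurable (PiM N M)"
    unfolding f_def using C(1) by measurable
  have main: "(\<integral>\<^sup>+ x. \<phi> (restrict x A) * (\<Prod>s\<in>A. k s (x s) (restrict x (Pa s))) \<partial>PiM A M)
     = (\<integral>\<^sup>+ x. \<phi> (restrict x A) * ((1/2) * ((\<Prod>s\<in>A. indicator (C False s) (x s)) + (\<Prod>s\<in>A. indicator (C True s) (x s)))) \<partial>PiM A M)"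
    if phi: "\<phi> \<in> borel_measurable (PiM A M)" for \<phi>
  proof -
    have mS: "(\<lambda>x. \<phi> (restrict x A)) \<in> borel_measurable (PiM N M)"
      using measurable_compose[OF measurable_restrict_subset[OF AN] phi] by simp
    have "(\<integral>\<^sup>+ x. \<phi> (restrict x A) * (\<Prod>s\<in>A. k s (x s) (restrict x (Pa s))) \<partial>PiM A M)
       = (\<integral>\<^sup>+ x. \<phi> (restrict x A) * g x \<partial>PiM N M)"
      unfolding g_def using marg[of N A Pa ord k \<phi>] fin AN Pa ordA Km K1 phi by auto
    also have "\<dots> = (\<integral>\<^sup>+ x. \<phi> (restrict x A) \<partial>density (PiM N M) g)"
      using nn_integral_density[OF gm mS] by (simp add: mult_ac)
    also have "\<dots> = (\<integral>\<^sup>+ x. \<phi> (restrict x A) \<partial>density (PiM N M) f)"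
      using eq unfolding f_def g_def by simp
    also have "\<dots> = (\<integral>\<^sup>+ x. \<phi> (restrict x A) * f x \<partial>PiM N M)"
      using nn_integral_density[OF fm mS] by (simp add: mult_ac)
    also have "\<dots> = (\<integral>\<^sup>+ x. \<phi> (restrict x A) * ((1/2) * ((\<Prod>s\<in>A. indicator (C False s) (x s)) + (\<Prod>s\<in>A. indicator (C True s) (x s)))) \<partial>PiM A M)"
      unfolding f_def using marg_f[of N A ord C \<phi>] fin AN ordA C phi by auto
    finally show ?thesis .
  qed
  define P0 where "P0 = (\<lambda>x. \<Prod>s\<in>W. indicator (C False s) (x s) :: ennreal)"
  define a where "a = (\<lambda>i x. \<integral>\<^sup>+ y. indicator (C i u) y * k u y (restrict x (Pa u)) \<partial>M u)"
  define R' where "R' = (\<lambda>w. \<Prod>s\<in>A-{u}. k s (w s) (restrict w (Pa s)))"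
  define c where "c = (\<lambda>j x. \<integral>\<^sup>+ z. indicator (C j v) z * R' (x(v:=z)) \<partial>M v)"
  define q where "q = (\<lambda>i j::bool. if i = j then 1/2 else 0 :: ennreal)"
  have Au: "A - {u} = insert v W" using AW uvne by auto
  have R'm: "R' \<in> borel_measurable (PiM (insert v W) M)"
    unfolding R'_def Au[symmetric]
    by (intro borel_measurable_prod_ennreal kern_meas[OF Km]) (use AN PaA uPa in auto)
  have P0m: "P0 \<in> borel_measurable (PiM W M)"
    unfolding P0_def using C(1) AW AN by (intro borel_measurable_prod_ennreal) auto
  have am: "a i \<in> borel_measurable (PiM W M)" for i
  proof -
    have "(\<lambda>(y,z). indicator (C i u) y * k u y z) \<in> borel_measurable (M u \<Otimes>\<^sub>M PiM (Pa u) M)"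
      using Km[of u] C(1)[of u i] uv by measurable
    then have "(\<lambda>(x,y). indicator (C i u) y * k u y (restrict x (Pa u))) \<in> borel_measurable (PiM W M \<Otimes>\<^sub>M M u)"
      using measurable_Pair_compose_split[of "\<lambda>y z. indicator (C i u) y * k u y z", OF _ measurable_snd
            measurable_compose[OF measurable_fst measurable_restrict_subset[OF PaU]]]
      by (simp add: split_def)
    then show ?thesis unfolding a_def
      by (rule M.borel_measurable_nn_integral[of "\<lambda>x y. indicator (C i u) y * k u y (restrict x (Pa u))", simplified])
  qed
  have cm: "c j \<in> borel_measurable (PiM W M)" for j
  proof -
    have m1: "(\<lambda>p. R' ((fst p)(v := snd p))) \<in> borel_measurable (PiM W M \<Otimes>\<^sub>M M v)"
      using measurable_compose[OF measurable_add_dim R'm] by (simp add: split_def)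
    have m2: "(\<lambda>p. indicator (C j v) (snd p) :: ennreal) \<in> borel_measurable (PiM W M \<Otimes>\<^sub>M M v)"
      using C(1)[of v j] uv by measurable
    have "(\<lambda>p. indicator (C j v) (snd p) * R' ((fst p)(v := snd p))) \<in> borel_measurable (PiM W M \<Otimes>\<^sub>M M v)"
      using m1 m2 by (rule borel_measurable_times_ennreal[rotated])
    then have "(\<lambda>(x,z). indicator (C j v) z * R' (x(v:=z))) \<in> borel_measurable (PiM W M \<Otimes>\<^sub>M M v)"
      by (simp add: split_def)
    then show ?thesis unfolding c_def
      by (rule M.borel_measurable_nn_integral[of "\<lambda>x z. indicator (C j v) z * R' (x(v:=z))", simplified])
  qed
  have P0_idem: "P0 x * P0 x = P0 x" for x
  proof (cases "\<forall>s\<in>W. x s \<in> C False s")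
    case True then have "P0 x = 1" unfolding P0_def by (intro prod.neutral) auto
    then show ?thesis by simp
  next
    case False then have "P0 x = 0" unfolding P0_def using AW(4) by (intro prod_zero) (auto simp: indicator_def)
    then show ?thesis by simp
  qed
  have key: "(\<integral>\<^sup>+ x. P0 x * indicator S x * (a i x * c j x) \<partial>PiM W M)
    = (\<integral>\<^sup>+ x. P0 x * indicator S x * q i j \<partial>PiM W M)"
    if S: "S \<in> sets (PiM W M)" for S i j
  proof -
    define \<phi> where "\<phi> = (\<lambda>x. (\<Prod>s\<in>W. indicator (C False s) (x s)) * indicator S (restrict x W)
        * indicator (C i u) (x u) * indicator (C j v) (x v) :: ennreal)"
    have phim: "\<phi> \<in> borel_measurable (PiM A M)"
    proof -
      have "(\<lambda>x. restrict x W) \<in> measurable (PiM A M) (PiM W M)"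
        using AW by (intro measurable_restrict_subset) auto
      then have "(\<lambda>x. indicator S (restrict x W) :: ennreal) \<in> borel_measurable (PiM A M)"
        using S by measurable
      moreover have "(\<lambda>x. \<Prod>s\<in>W. indicator (C False s) (x s) :: ennreal) \<in> borel_measurable (PiM A M)"
        using C(1) AW AN by (intro borel_measurable_prod_ennreal) auto
      moreover have "(\<lambda>x. indicator (C i u) (x u) :: ennreal) \<in> borel_measurable (PiM A M)"
        using C(1)[of u i] uv uA by measurable
      moreover have "(\<lambda>x. indicator (C j v) (x v) :: ennreal) \<in> borel_measurable (PiM A M)"
        using C(1)[of v j] uv uA by measurable
      ultimately show ?thesis unfolding \<phi>_def by (intro borel_measurable_times_ennreal)
    qed
    have phiX: "\<phi> (restrict (x(v:=z, u:=y)) A) = P0 x * indicator S x * indicator (C i u) y * indicator (C j v) z"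
      if x: "x \<in> space (PiM W M)" for x y z
    proof -
      have r: "restrict (restrict (x(v:=z, u:=y)) A) W = x"
        using x AW unfolding space_PiM by (auto simp: restrict_def fun_eq_iff PiE_iff extensional_def)
      have p: "(\<Prod>s\<in>W. indicator (C False s) (restrict (x(v:=z, u:=y)) A s)) = P0 x"
        unfolding P0_def using AW by (intro prod.cong) auto
      show ?thesis unfolding \<phi>_def r p using AW uA uvne by simp
    qed
    have kapm: "(\<lambda>x. \<phi> (restrict x A) * (\<Prod>s\<in>A. k s (x s) (restrict x (Pa s)))) \<in> borel_measurable (PiM A M)"
      using measurable_compose[OF measurable_restrict_subset[OF order_refl] phim] AN PaA
      by (intro borel_measurable_times_ennreal borel_measurable_prod_ennreal kern_meas[OF Km]) auto
    have fAm: "(\<lambda>x. \<phi> (restrict x A) * ((1/2) * ((\<Prod>s\<in>A. indicator (C False s) (x s)) + (\<Prod>s\<in>A. indicator (C True s) (x s))))) \<in> borel_measurable (PiM A M)"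
      using measurable_compose[OF measurable_restrict_subset[OF order_refl] phim] AN C(1)
      by (intro borel_measurable_times_ennreal borel_measurable_add borel_measurable_const borel_measurable_prod_ennreal) auto
    have spl: "integral\<^sup>N (PiM A M) F = (\<integral>\<^sup>+ x. (\<integral>\<^sup>+ z. (\<integral>\<^sup>+ y. F (x(v:=z, u:=y)) \<partial>M u) \<partial>M v) \<partial>PiM W M)"
      if "F \<in> borel_measurable (PiM A M)" for F
      using split2[of W u v F] that AW uvne by simp
    have L: "(\<integral>\<^sup>+ x. \<phi> (restrict x A) * (\<Prod>s\<in>A. k s (x s) (restrict x (Pa s))) \<partial>PiM A M)
      = (\<integral>\<^sup>+ x. P0 x * indicator S x * (a i x * c j x) \<partial>PiM W M)"
      unfolding spl[OF kapm]
    proof (rule nn_integral_cong)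
      fix x assume x: "x \<in> space (PiM W M)"
      have kap: "(\<Prod>s\<in>A. k s ((x(v:=z, u:=y)) s) (restrict (x(v:=z, u:=y)) (Pa s)))
          = k u y (restrict x (Pa u)) * R' (x(v:=z))" for y z
      proof -
        have "(\<Prod>s\<in>A. k s ((x(v:=z, u:=y)) s) (restrict (x(v:=z, u:=y)) (Pa s)))
          = k u y (restrict (x(v:=z, u:=y)) (Pa u)) * (\<Prod>s\<in>A-{u}. k s ((x(v:=z, u:=y)) s) (restrict (x(v:=z, u:=y)) (Pa s)))"
          using prod.remove[OF AW(5) uA(1), of "\<lambda>s. k s ((x(v:=z, u:=y)) s) (restrict (x(v:=z, u:=y)) (Pa s))"]
          by (simp only: fun_upd_same)
        also have "restrict (x(v:=z, u:=y)) (Pa u) = restrict x (Pa u)"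
          using uPa[of u] uA vu by (simp add: restrict_upd_notin)
        also have "(\<Prod>s\<in>A-{u}. k s ((x(v:=z, u:=y)) s) (restrict (x(v:=z, u:=y)) (Pa s))) = R' (x(v:=z))"
          unfolding R'_def using uPa by (intro prod.cong) (auto simp: restrict_upd_notin)
        finally show ?thesis .
      qed
      have zsp: "restrict x (Pa u) \<in> space (PiM (Pa u) M)"
        using x PaU by (auto simp: space_PiM PiE_iff)
      have ym: "(\<lambda>y. indicator (C i u) y * k u y (restrict x (Pa u))) \<in> borel_measurable (M u)"
      proof -
        have "(\<lambda>y. k u y (restrict x (Pa u))) \<in> borel_measurable (M u)"
          using measurable_Pair_compose_split[OF Km[of u] measurable_ident measurable_const[OF zsp]] uv by simp
        then show ?thesis using C(1)[of u i] uv by measurable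
      qed
      have zm: "(\<lambda>z. indicator (C j v) z * R' (x(v:=z))) \<in> borel_measurable (M v)"
      proof -
        have "(\<lambda>z. R' (x(v:=z))) \<in> borel_measurable (M v)"
          using measurable_compose[OF measurable_component_update[OF x AW(3)] R'm] by simp
        then show ?thesis using C(1)[of v j] uv by measurable
      qed
      have "(\<integral>\<^sup>+ z. (\<integral>\<^sup>+ y. \<phi> (restrict (x(v:=z, u:=y)) A) * (\<Prod>s\<in>A. k s ((x(v:=z, u:=y)) s) (restrict (x(v:=z, u:=y)) (Pa s))) \<partial>M u) \<partial>M v)
        = (\<integral>\<^sup>+ z. (\<integral>\<^sup>+ y. (P0 x * indicator S x * indicator (C j v) z * R' (x(v:=z))) * (indicator (C i u) y * k u y (restrict x (Pa u))) \<partial>M u) \<partial>M v)"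
        unfolding phiX[OF x] kap by (simp add: mult_ac)
      also have "\<dots> = (\<integral>\<^sup>+ z. (P0 x * indicator S x * a i x) * (indicator (C j v) z * R' (x(v:=z))) \<partial>M v)"
        unfolding nn_integral_cmult[OF ym] a_def by (simp add: mult_ac)
      also have "\<dots> = P0 x * indicator S x * (a i x * c j x)"
        unfolding nn_integral_cmult[OF zm] c_def by (simp add: mult_ac)
      finally show "(\<integral>\<^sup>+ z. (\<integral>\<^sup>+ y. \<phi> (restrict (x(v:=z, u:=y)) A) * (\<Prod>s\<in>A. k s ((x(v:=z, u:=y)) s) (restrict (x(v:=z, u:=y)) (Pa s))) \<partial>M u) \<partial>M v)
        = P0 x * indicator S x * (a i x * c j x)" .
    qed
    have Rr: "(\<integral>\<^sup>+ x. \<phi> (restrict x A) * ((1/2) * ((\<Prod>s\<in>A. indicator (C False s) (x s)) + (\<Prod>s\<in>A. indicator (C True s) (x s)))) \<partial>PiM A M)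
      = (\<integral>\<^sup>+ x. P0 x * indicator S x * q i j \<partial>PiM W M)"
      unfolding spl[OF fAm]
    proof (rule nn_integral_cong)
      fix x assume x: "x \<in> space (PiM W M)"
      have pb: "(\<Prod>s\<in>A. indicator (C b s) ((x(v:=z, u:=y)) s)) = indicator (C b u) y * indicator (C b v) z * P0 x" for b y z
      proof -
        have "(\<Prod>s\<in>A. indicator (C b s) ((x(v:=z, u:=y)) s) :: ennreal)
          = indicator (C b u) y * (indicator (C b v) z * (\<Prod>s\<in>W. indicator (C b s) ((x(v:=z, u:=y)) s)))"
          unfolding AW(1) using AW uvne by simp
        also have "(\<Prod>s\<in>W. indicator (C b s) ((x(v:=z, u:=y)) s)) = P0 x"
          unfolding P0_def
        proof (intro prod.cong refl)
          fix s assume s: "s \<in> W"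
          then have "C b s = C False s" using CW[of s] AN uA unfolding W_def A_def by (cases b) auto
          then show "indicator (C b s) ((x(v:=z, u:=y)) s) = (indicator (C False s) (x s) :: ennreal)"
            using s AW by auto
        qed
        finally show ?thesis by (simp only: mult.assoc)
      qed
      have ev: "\<phi> (restrict (x(v:=z, u:=y)) A) * ((1/2) * ((\<Prod>s\<in>A. indicator (C False s) ((x(v:=z, u:=y)) s)) + (\<Prod>s\<in>A. indicator (C True s) ((x(v:=z, u:=y)) s))))
        = (P0 x * indicator S x * (1/2)) * (if i = j then indicator (C i u) y * indicator (C i v) z else 0)" for y z
      proof -
        have "\<phi> (restrict (x(v:=z, u:=y)) A) * ((1/2) * ((\<Prod>s\<in>A. indicator (C False s) ((x(v:=z, u:=y)) s)) + (\<Prod>s\<in>A. indicator (C True s) ((x(v:=z, u:=y)) s))))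
          = (P0 x * P0 x * indicator S x * (1/2)) * ((indicator (C i u) y * indicator (C j v) z) *
              (indicator (C False u) y * indicator (C False v) z + indicator (C True u) y * indicator (C True v) z))"
          unfolding phiX[OF x] pb by (simp add: algebra_simps)
        then show ?thesis unfolding P0_idem ind_pair_lemma[OF Cdisj] .
      qed
      show "(\<integral>\<^sup>+ z. (\<integral>\<^sup>+ y. \<phi> (restrict (x(v:=z, u:=y)) A) * ((1/2) * ((\<Prod>s\<in>A. indicator (C False s) ((x(v:=z, u:=y)) s)) + (\<Prod>s\<in>A. indicator (C True s) ((x(v:=z, u:=y)) s)))) \<partial>M u) \<partial>M v)
        = P0 x * indicator S x * q i j"
      proof (cases "i = j")
        case True
        have "(\<integral>\<^sup>+ z. (\<integral>\<^sup>+ y. ((P0 x * indicator S x * (1/2)) * indicator (C i v) z) * indicator (C i u) y \<partial>M u) \<partial>M v)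
          = (\<integral>\<^sup>+ z. (P0 x * indicator S x * (1/2)) * indicator (C i v) z \<partial>M v)"
          using C[of u i] uv by (simp add: nn_integral_cmult_indicator)
        also have "\<dots> = P0 x * indicator S x * q i j"
          using C[of v i] uv True by (simp add: nn_integral_cmult_indicator q_def)
        finally show ?thesis unfolding ev using True by (simp add: mult_ac)
      next
        case False
        then show ?thesis unfolding ev by (simp add: q_def)
      qed
    qed
    show ?thesis using L Rr main[OF phim] by simp
  qed
  interpret W: sigma_finite_measure "PiM W M" by (rule sigma_finite[OF AW(4)])
  have AEij: "AE x in PiM W M. P0 x * (a i x * c j x) = P0 x * q i j" for i j
  proof -
    have m1: "(\<lambda>x. P0 x * (a i x * c j x)) \<in> borel_measurable (PiM W M)"
      using P0m am cm by (intro borel_measurable_times_ennreal)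
    have m2: "(\<lambda>x. P0 x * q i j) \<in> borel_measurable (PiM W M)"
      using P0m by (intro borel_measurable_times_ennreal) auto
    have "density (PiM W M) (\<lambda>x. P0 x * (a i x * c j x)) = density (PiM W M) (\<lambda>x. P0 x * q i j)"
    proof (rule measure_eqI)
      fix S assume "S \<in> sets (density (PiM W M) (\<lambda>x. P0 x * (a i x * c j x)))"
      then have S: "S \<in> sets (PiM W M)" by simp
      show "emeasure (density (PiM W M) (\<lambda>x. P0 x * (a i x * c j x))) S = emeasure (density (PiM W M) (\<lambda>x. P0 x * q i j)) S"
        unfolding emeasure_density[OF m1 S] emeasure_density[OF m2 S]
        using key[OF S, of i j] by (simp add: mult_ac)
    qed simp
    then show ?thesis using W.density_unique[OF m1 m2] by simp
  qed
  have AEi: "AE x in PiM W M. \<forall>j. P0 x * (a i x * c j x) = P0 x * q i j" for i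
    unfolding AE_all_countable using AEij by blast
  have AEall: "AE x in PiM W M. \<forall>i j. P0 x * (a i x * c j x) = P0 x * q i j"
    by (subst AE_all_countable) (use AEi in blast)
  have WN: "s \<in> N" if "s \<in> W" for s using that AN uA by blast
  have CWs: "PiE W (C False) \<subseteq> space (PiM W M)"
  proof
    fix x assume x: "x \<in> PiE W (C False)"
    have "C False s \<subseteq> space (M s)" if "s \<in> W" for s using sets.sets_into_space[OF C(1)[OF WN[OF that]]] .
    then show "x \<in> space (PiM W M)" using x unfolding space_PiM PiE_iff by blast
  qed
  have meas1: "emeasure (PiM W M) (PiE W (C False)) = 1"
    using C WN by (subst emeasure_PiM[OF AW(4)]) (auto intro!: prod.neutral)
  obtain x where x: "x \<in> PiE W (C False)" "\<forall>i j. P0 x * (a i x * c j x) = P0 x * q i j"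
  proof (rule ccontr)
    assume "\<not> thesis"
    then have "\<forall>x\<in>PiE W (C False). \<not> (\<forall>i j. P0 x * (a i x * c j x) = P0 x * q i j)"
      using that by blast
    have "AE x in PiM W M. \<not> (x \<in> PiE W (C False))"
      using AEall by eventually_elim (use \<open>\<forall>x\<in>PiE W (C False). _\<close> in blast)
    from emeasure_eq_0_AE[OF this] have "emeasure (PiM W M) {x \<in> space (PiM W M). x \<in> PiE W (C False)} = 0"
      by simp
    moreover have "{x \<in> space (PiM W M). x \<in> PiE W (C False)} = PiE W (C False)" using CWs by blast
    ultimately have "emeasure (PiM W M) (PiE W (C False)) = 0" by simp
    with meas1 show False by simp
  qed
  have "P0 x = 1" using x(1) unfolding P0_def by (intro prod.neutral) (auto simp: PiE_iff)
  with x(2) have e: "a i x * c j x = q i j" for i j by simp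
  from e[of False False] have "a False x \<noteq> 0" by (auto simp: q_def)
  moreover from e[of True True] have "c True x \<noteq> 0" by (auto simp: q_def)
  moreover from e[of False True] have "a False x * c True x = 0" by (simp add: q_def)
  ultimately show False by simp
qed

end


lemma two_elems:
  assumes "finite A" "card A \<ge> 2"
  obtains a b where "a \<in> A" "b \<in> A" "a \<noteq> b"
proof -
  have "A \<noteq> {}" using assms by auto
  then obtain a where a: "a \<in> A" by auto
  have "card (A - {a}) \<ge> 1" using assms a by (simp add: card_Diff_singleton)
  then have "A - {a} \<noteq> {}" by (metis card.empty not_one_le_zero)
  then obtain b where "b \<in> A - {a}" by auto
  with a that show ?thesis by auto
qed

lemma state_space_ok:
  fixes M :: "(nat \<Rightarrow> real) measure"
  assumes "(\<exists>A. finite A \<and> card A \<ge> 2 \<and> M = count_space A) \<or> (\<exists>d\<ge>1. M = (\<Pi>\<^sub>M i\<in>{..<d}. lborel))"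
  shows "sigma_finite_measure M \<and> (\<exists>B0 B1. B0 \<in> sets M \<and> B1 \<in> sets M \<and> B0 \<inter> B1 = {}
           \<and> emeasure M B0 = 1 \<and> emeasure M B1 = 1)"
  using assms
proof
  assume "\<exists>A. finite A \<and> card A \<ge> 2 \<and> M = count_space A"
  then obtain A where A: "finite A" "card A \<ge> 2" "M = count_space A" by auto
  obtain a b where ab: "a \<in> A" "b \<in> A" "a \<noteq> b" using two_elems[OF A(1,2)] by blast
  show ?thesis
    using A ab sigma_finite_measure_count_space_finite[OF A(1)] by (intro conjI exI[of _ "{a}"] exI[of _ "{b}"]) auto
next
  assume "\<exists>d\<ge>1. M = (\<Pi>\<^sub>M i\<in>{..<d}. lborel)"
  then obtain d where d: "d \<ge> 1" "M = (\<Pi>\<^sub>M i\<in>{..<d}. lborel)" by auto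
  interpret L: product_sigma_finite "\<lambda>_::nat. lborel :: real measure"
    by unfold_locales
  define B where "B = (\<lambda>c::real. PiE {..<d} (\<lambda>j. if j = 0 then {c..c+1} else {0..1::real}))"
  have Bs: "B c \<in> sets M" for c unfolding B_def d(2) by (intro sets_PiM_I_finite) auto
  have Bm: "emeasure M (B c) = 1" for c
    unfolding B_def d(2) by (subst L.emeasure_PiM) (auto intro!: prod.neutral)
  have "B 0 \<inter> B 2 = {}"
  proof (rule ccontr)
    assume "B 0 \<inter> B 2 \<noteq> {}"
    then obtain x where "x \<in> B 0" "x \<in> B 2" by auto
    moreover have "(0::nat) \<in> {..<d}" using d(1) by auto
    ultimately have "x 0 \<in> {0..0+1}" "x 0 \<in> {2..2+1}" unfolding B_def PiE_iff by (metis (full_types))+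
    then show False by auto
  qed
  then show ?thesis
    using Bs Bm d L.sigma_finite[of "{..<d}"] by (intro conjI exI[of _ "B 0"] exI[of _ "B 2"]) auto
qed



lemma half_twice: "(1/2::ennreal) * (1 + 1) = 1"
proof -
  have h: "ennreal (1/2) = 1/2" using divide_ennreal[of 1 2] by simp
  have "(1/2::ennreal) * (1 + 1) = ennreal (1/2) * ennreal 2" by (simp only: h one_add_one ennreal_numeral)
  also have "\<dots> = ennreal (1/2 * 2)" by (rule ennreal_mult[symmetric]) auto
  finally show ?thesis by simp
qed

theorem lemma4:
  fixes N :: "'n set" and E E' :: "('n \<times> 'n) set"
    and M :: "'n \<Rightarrow> (nat \<Rightarrow> real) measure" and O' :: "'n \<Rightarrow> nat"
    and r u v :: 'n
  assumes "is_DAG N E" and "is_DAG N E'"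
    and "valid_state_spaces N M"
    and "Pfam N E M \<subseteq> Pfam N E' M"
    and "E\<inverse> \<subseteq> E'"
    and "card (roots N E) = 1"
    and "topo_order N E' O'"
    and "r \<in> N" and "u \<in> N" and "v \<in> N"
    and "O' v < O' u" and "O' u < O' r"
    and "(r, v) \<in> E"
  shows "(v, u) \<in> E'"
proof (rule ccontr)
  assume vu: "(v, u) \<notin> E'"
  have finN: "finite N" and EN: "E \<subseteq> N \<times> N" and acyc: "acyclic E"
    using assms(1) unfolding is_DAG_def by auto
  have E'N: "E' \<subseteq> N \<times> N" using assms(2) unfolding is_DAG_def by auto
  have ordE': "O' s < O' t" if "(s,t) \<in> E'" for s t
    using assms(7) that unfolding topo_order_def by auto
  have ordE: "O' t < O' s" if "(s,t) \<in> E" for s t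
    using ordE' assms(5) that by auto
  have ordtr: "O' t < O' s" if "(s,t) \<in> E\<^sup>+" for s t
    using that by (induction rule: trancl_induct) (auto dest: ordE)
  have wfE: "wf E"
    using finite_acyclic_wf[OF finite_subset[OF EN] acyc] finN by auto
  obtain \<rho> where rho: "roots N E = {\<rho>}" using assms(6) card_1_singletonE by blast
  have rhoN: "\<rho> \<in> N" and parho: "pa E \<rho> = {}" using rho unfolding roots_def by auto
  have nonroot: "pa E s \<noteq> {}" if "s \<in> N" "s \<noteq> \<rho>" for s
    using that rho unfolding roots_def by auto
  have anc: "s \<in> N \<longrightarrow> (\<rho>, s) \<in> E\<^sup>*" for s
  proof (induction s rule: wf_induct_rule[OF wfE])
    case (1 s)
    show ?case
    proof
      assume s: "s \<in> N"
      show "(\<rho>, s) \<in> E\<^sup>*"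
      proof (cases "s = \<rho>")
        case False
        then obtain t where t: "(t, s) \<in> E" using nonroot[OF s] unfolding pa_def by auto
        then have "t \<in> N" using EN by auto
        with 1 t have "(\<rho>, t) \<in> E\<^sup>*" by auto
        with t show ?thesis by auto
      qed simp
    qed
  qed
  define T where "T = {s\<in>N. (s,u) \<in> E\<^sup>* \<or> (s,r) \<in> E\<^sup>*} \<union> {v}"
  have TN: "T \<subseteq> N" unfolding T_def using assms(10) by auto
  have uT: "u \<in> T" and vT: "v \<in> T" and rT: "r \<in> T" unfolding T_def using assms(8-10) by auto
  have rhoT: "\<rho> \<in> T" unfolding T_def using anc assms(9) rhoN by auto
  have notT: "s \<notin> T" if "s \<in> N" "s \<noteq> u" "s \<noteq> v" "O' s \<le> O' u" for s
  proof
    assume "s \<in> T"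
    then have "(s,u) \<in> E\<^sup>* \<or> (s,r) \<in> E\<^sup>*" using that unfolding T_def by auto
    then show False
    proof
      assume "(s,u) \<in> E\<^sup>*"
      then have "(s,u) \<in> E\<^sup>+" using that(2) by (auto simp: rtrancl_eq_or_trancl)
      then show False using ordtr that(4) by fastforce
    next
      assume "(s,r) \<in> E\<^sup>*"
      then have "s = r \<or> (s,r) \<in> E\<^sup>+" by (auto simp: rtrancl_eq_or_trancl)
      then show False using ordtr[of s r] that(4) assms(12) by auto
    qed
  qed
  define par where "par s = (if s = v then r else (SOME t. (t,s) \<in> E))" for s
  have parE: "(par s, s) \<in> E \<and> par s \<in> T" if "s \<in> T" "s \<noteq> \<rho>" for s
  proof (cases "s = v")
    case True
    then show ?thesis using assms(13) rT unfolding par_def by auto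
  next
    case False
    then have s: "s \<in> N" "(s,u) \<in> E\<^sup>* \<or> (s,r) \<in> E\<^sup>*" using that unfolding T_def by auto
    then have "\<exists>t. (t,s) \<in> E" using nonroot[OF s(1) that(2)] unfolding pa_def by auto
    then have ps: "(par s, s) \<in> E" unfolding par_def using False by (auto intro: someI_ex)
    then have "par s \<in> N" using EN by auto
    moreover have "(par s,u) \<in> E\<^sup>* \<or> (par s,r) \<in> E\<^sup>*"
      using s(2) ps by (meson converse_rtrancl_into_rtrancl)
    ultimately show ?thesis using ps unfolding T_def by auto
  qed
  have parpa: "par s \<in> pa E s" if "s \<in> T" "s \<noteq> \<rho>" for s
    using parE[OF that] unfolding pa_def by auto
  have "\<forall>s\<in>N. sigma_finite_measure (M s) \<and> (\<exists>B0 B1. B0 \<in> sets (M s) \<and> B1 \<in> sets (M s) \<and> B0 \<inter> B1 = {}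
           \<and> emeasure (M s) B0 = 1 \<and> emeasure (M s) B1 = 1)"
    using assms(3) state_space_ok unfolding valid_state_spaces_def by blast
  then have "\<forall>s\<in>N. \<exists>p. fst p \<in> sets (M s) \<and> snd p \<in> sets (M s) \<and> fst p \<inter> snd p = {}
           \<and> emeasure (M s) (fst p) = 1 \<and> emeasure (M s) (snd p) = 1"
    and sfM: "\<And>s. s \<in> N \<Longrightarrow> sigma_finite_measure (M s)" by auto
  then obtain Bp where Bp: "\<forall>s\<in>N. fst (Bp s) \<in> sets (M s) \<and> snd (Bp s) \<in> sets (M s) \<and> fst (Bp s) \<inter> snd (Bp s) = {}
           \<and> emeasure (M s) (fst (Bp s)) = 1 \<and> emeasure (M s) (snd (Bp s)) = 1"
    by metis
  define B0 where "B0 s = fst (Bp s)" for s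
  define B1 where "B1 s = snd (Bp s)" for s
  have B: "B0 s \<in> sets (M s)" "B1 s \<in> sets (M s)" "B0 s \<inter> B1 s = {}" "emeasure (M s) (B0 s) = 1" "emeasure (M s) (B1 s) = 1"
    if "s \<in> N" for s using Bp that unfolding B0_def B1_def by auto
  define C where "C b s = (if b \<and> s \<in> T then B1 s else B0 s)" for b s
  define k :: "'n \<Rightarrow> (nat \<Rightarrow> real) \<Rightarrow> ('n \<Rightarrow> nat \<Rightarrow> real) \<Rightarrow> real" where
    "k s y z = (if s = \<rho> then 1/2 * (indicator (B0 s) y + indicator (B1 s) y)
       else if s \<in> T then (if z (par s) \<in> B1 (par s) then indicator (B1 s) y else indicator (B0 s) y)
       else indicator (B0 s) y)" for s y z
  have ident: "(\<Prod>s\<in>N. k s (x s) (restrict x (pa E s)))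
     = 1/2 * ((\<Prod>s\<in>N. indicator (C False s) (x s)) + (\<Prod>s\<in>N. indicator (C True s) (x s)))" for x
  proof -
    define Q where "Q b = (\<forall>s\<in>N. x s \<in> C b s)" for b
    have F: "(\<Prod>s\<in>N. indicator (C b s) (x s) :: real) = (if Q b then 1 else 0)" for b
    proof (cases "Q b")
      case True then show ?thesis unfolding Q_def by (auto intro!: prod.neutral)
    next
      case False
      then obtain s where "s \<in> N" "x s \<notin> C b s" unfolding Q_def by auto
      then show ?thesis using False finN by (auto intro!: prod_zero bexI[of _ s])
    qed
    have CT: "C b \<rho> = (if b then B1 \<rho> else B0 \<rho>)" for b unfolding C_def using rhoT by auto
    have notboth: "\<not> (Q False \<and> Q True)"
      using B(3)[OF rhoN] rhoN CT unfolding Q_def by (metis disjoint_iff)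
    have Cp: "C b s = (if b then B1 s else B0 s)" if "s \<in> T" for b s unfolding C_def using that by auto
    have Cn: "C b s = B0 s" if "s \<notin> T" for b s unfolding C_def using that by auto
    have rx: "restrict x (pa E s) (par s) = x (par s)" if "s \<in> T" "s \<noteq> \<rho>" for s
      using parpa[OF that] by simp
    show ?thesis
    proof (cases "Q False \<or> Q True")
      case True
      then obtain b where Qb: "Q b" and nQ: "\<not> Q (\<not> b)" using notboth by (cases "Q False") auto
      have fac: "k s (x s) (restrict x (pa E s)) = (if s = \<rho> then 1/2 else 1)" if s: "s \<in> N" for s
      proof -
        have xs: "x s \<in> C b s" using Qb s unfolding Q_def by auto
        show ?thesis
        proof (cases "s = \<rho>")
          case True
          then show ?thesis using xs CT B(3)[OF rhoN] unfolding k_def by (cases b) (auto simp: indicator_def)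
        next
          case False
          show ?thesis
          proof (cases "s \<in> T")
            case sT: True
            have pT: "par s \<in> T" using parE[OF sT False] by auto
            have xp: "x (par s) \<in> C b (par s)" using Qb pT TN unfolding Q_def by auto
            show ?thesis using xs xp Cp[OF sT] Cp[OF pT] B(3)[OF subsetD[OF TN pT]] pT TN sT False
              unfolding k_def rx[OF sT False] by (cases b) (auto simp: indicator_def)
          next
            case sT: False
            then show ?thesis using xs Cn[OF sT] False unfolding k_def by auto
          qed
        qed
      qed
      have "(\<Prod>s\<in>N. k s (x s) (restrict x (pa E s))) = (\<Prod>s\<in>N. (if s = \<rho> then 1/2 else 1 :: real))"
        using fac by (rule prod.cong[OF refl])
      also have "\<dots> = 1/2" using finN rhoN by (simp add: prod.If_cases Int_absorb1)
      finally show ?thesis unfolding F using Qb nQ by (cases b) auto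
    next
      case False
      have "(\<Prod>s\<in>N. k s (x s) (restrict x (pa E s))) = 0"
      proof (rule ccontr)
        assume nz: "(\<Prod>s\<in>N. k s (x s) (restrict x (pa E s))) \<noteq> 0"
        then have nzs: "k s (x s) (restrict x (pa E s)) \<noteq> 0" if "s \<in> N" for s
          using that finN by (auto simp: prod_zero_iff)
        define b where "b = (x \<rho> \<in> B1 \<rho>)"
        have inT: "s \<in> T \<longrightarrow> x s \<in> C b s" for s
        proof (induction s rule: wf_induct_rule[OF wfE])
          case (1 s)
          show ?case
          proof
            assume sT: "s \<in> T"
            show "x s \<in> C b s"
            proof (cases "s = \<rho>")
              case True
              then show ?thesis using nzs[OF rhoN] CT unfolding k_def b_def by (auto simp: indicator_def split: if_splits)
            next
              case False
              have pT: "par s \<in> T" and pE: "(par s, s) \<in> E" using parE[OF sT False] by auto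
              have xp: "x (par s) \<in> C b (par s)" using 1 pT pE by auto
              have nz1: "k s (x s) (restrict x (pa E s)) \<noteq> 0" using nzs sT TN by auto
              show ?thesis using nz1 xp Cp[OF sT] Cp[OF pT] B(3)[OF subsetD[OF TN pT]] pT TN sT False
                unfolding k_def rx[OF sT False] by (cases b) (auto simp: indicator_def split: if_splits)
            qed
          qed
        qed
        have "Q b" unfolding Q_def
        proof
          fix s assume s: "s \<in> N"
          show "x s \<in> C b s"
          proof (cases "s \<in> T")
            case True then show ?thesis using inT by auto
          next
            case sT: False
            then have "s \<noteq> \<rho>" using rhoT by auto
            then show ?thesis using nzs[OF s] sT Cn[OF sT] unfolding k_def by (auto simp: indicator_def split: if_splits)
          qed
        qed
        then show False using False by (cases b) auto
      qed
      then show ?thesis unfolding F using False by auto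
    qed
  qed
  define M2 where "M2 s = (if s \<in> N then M s else count_space {})" for s
  have sf2: "sigma_finite_measure (M2 s)" for s
    by (cases "s \<in> N") (simp_all add: M2_def sfM sigma_finite_measure_count_space_finite)
  interpret M2: product_sigma_finite M2
    by (rule product_sigma_finite.intro) (rule sf2)
  have M2N: "M2 s = M s" if "s \<in> N" for s using that unfolding M2_def by auto
  have PiM2: "PiM S M2 = PiM S M" if "S \<subseteq> N" for S
    using that by (intro PiM_cong) (auto simp: M2N)
  have paN: "pa E s \<subseteq> N" for s using EN unfolding pa_def by auto
  have pa'N: "pa E' s \<subseteq> N" for s using E'N unfolding pa_def by auto
  define fe where "fe = (\<lambda>x. (1/2) * ((\<Prod>s\<in>N. indicator (C False s) (x s)) + (\<Prod>s\<in>N. indicator (C True s) (x s))) :: ennreal)"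
  have fe_eq: "ennreal (\<Prod>s\<in>N. k s (x s) (restrict x (pa E s))) = fe x" for x
  proof -
    define a where "a b = (\<Prod>s\<in>N. indicator (C b s) (x s) :: real)" for b
    have nn: "0 \<le> a b" for b unfolding a_def by (intro prod_nonneg) auto
    have ea: "ennreal (a b) = (\<Prod>s\<in>N. indicator (C b s) (x s))" for b
      unfolding a_def by (subst prod_ennreal[symmetric]) (auto simp: ennreal_indicator)
    have h: "ennreal (1/2) = 1/2" using divide_ennreal[of 1 2] by simp
    have "ennreal (1/2 * (a False + a True)) = ennreal (1/2) * ennreal (a False + a True)"
      by (rule ennreal_mult) (use nn in auto)
    also have "ennreal (a False + a True) = ennreal (a False) + ennreal (a True)"
      by (rule ennreal_plus[OF nn nn])
    finally show ?thesis unfolding ident fe_def a_def[symmetric] h ea .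
  qed
  define P where "P = density (PiM N M) (\<lambda>x. ennreal (\<Prod>s\<in>N. k s (x s) (restrict x (pa E s))))"
  have Cs: "C b s \<in> sets (M s)" "emeasure (M s) (C b s) = 1" if "s \<in> N" for b s
    using B[OF that] unfolding C_def by auto
  have fem: "fe \<in> borel_measurable (PiM N M)"
    unfolding fe_def using Cs(1) by (intro borel_measurable_times_ennreal borel_measurable_add borel_measurable_const borel_measurable_prod_ennreal) auto
  have P_fe: "P = density (PiM N M) fe" unfolding P_def fe_eq ..
  have intF: "(\<integral>\<^sup>+ x. (\<Prod>s\<in>N. indicator (C b s) (x s)) \<partial>PiM N M) = 1" for b
  proof -
    have "(\<integral>\<^sup>+ x. (\<Prod>s\<in>N. indicator (C b s) (x s)) \<partial>PiM N M2) = (\<Prod>s\<in>N. integral\<^sup>N (M2 s) (indicator (C b s)))"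
      using Cs M2N finN by (intro M2.product_nn_integral_prod) auto
    also have "\<dots> = 1" using Cs M2N by (intro prod.neutral) auto
    finally show ?thesis using PiM2[OF order_refl] by simp
  qed
  have probP: "prob_space P"
  proof (rule prob_spaceI)
    have "emeasure P (space P) = (\<integral>\<^sup>+ x. fe x * indicator (space (PiM N M)) x \<partial>PiM N M)"
      unfolding P_fe by (simp add: emeasure_density[OF fem])
    also have "\<dots> = (\<integral>\<^sup>+ x. fe x \<partial>PiM N M)" by (intro nn_integral_cong) simp
    also have "\<dots> = (1/2) * (1 + 1)"
      unfolding fe_def using Cs(1) intF
      by (simp add: nn_integral_cmult nn_integral_add borel_measurable_prod_ennreal)
    also have "\<dots> = 1" by (rule half_twice)
    finally show "emeasure P (space P) = 1" .
  qed
  have kmeas: "(\<lambda>(y, z). k s y z) \<in> borel_measurable (M s \<Otimes>\<^sub>M (\<Pi>\<^sub>M t\<in>pa E s. M t))" if s: "s \<in> N" for s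
  proof -
    have i0: "(\<lambda>p. indicator (B0 s) (fst p) :: real) \<in> borel_measurable (M s \<Otimes>\<^sub>M (\<Pi>\<^sub>M t\<in>pa E s. M t))"
      using B(1)[OF s] by measurable
    have i1: "(\<lambda>p. indicator (B1 s) (fst p) :: real) \<in> borel_measurable (M s \<Otimes>\<^sub>M (\<Pi>\<^sub>M t\<in>pa E s. M t))"
      using B(2)[OF s] by measurable
    show ?thesis
    proof (cases "s = \<rho>")
      case True
      have "(\<lambda>p. 1/2 * (indicator (B0 s) (fst p) + indicator (B1 s) (fst p)) :: real) \<in> borel_measurable (M s \<Otimes>\<^sub>M (\<Pi>\<^sub>M t\<in>pa E s. M t))"
        using i0 i1 by measurable
      then show ?thesis unfolding k_def using True by (simp add: split_def)
    next
      case nr: False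
      show ?thesis
      proof (cases "s \<in> T")
        case sT: True
        have pp: "par s \<in> pa E s" by (rule parpa[OF sT nr])
        have pN: "par s \<in> N" using pp paN by auto
        have h: "(\<lambda>p. snd p (par s)) \<in> measurable (M s \<Otimes>\<^sub>M (\<Pi>\<^sub>M t\<in>pa E s. M t)) (M (par s))"
          by (rule measurable_compose[OF measurable_snd measurable_component_singleton[OF pp]])
        have "{p \<in> space (M s \<Otimes>\<^sub>M (\<Pi>\<^sub>M t\<in>pa E s. M t)). snd p (par s) \<in> B1 (par s)} \<in> sets (M s \<Otimes>\<^sub>M (\<Pi>\<^sub>M t\<in>pa E s. M t))"
          using measurable_sets[OF h B(2)[OF pN]] by (simp add: vimage_def Int_def conj_commute)
        then have "(\<lambda>p. if snd p (par s) \<in> B1 (par s) then indicator (B1 s) (fst p) else indicator (B0 s) (fst p) :: real)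
           \<in> borel_measurable (M s \<Otimes>\<^sub>M (\<Pi>\<^sub>M t\<in>pa E s. M t))"
          using i0 i1 by (intro measurable_If)
        then show ?thesis unfolding k_def using nr sT by (simp add: split_def)
      next
        case sT: False
        then show ?thesis unfolding k_def using nr i0 by (simp add: split_def)
      qed
    qed
  qed
  have knorm: "(\<integral>\<^sup>+ y. ennreal (k s y z) \<partial>M s) = 1" if s: "s \<in> N" for s z
  proof (cases "s = \<rho>")
    case True
    have h: "ennreal (1/2) = 1/2" using divide_ennreal[of 1 2] by simp
    have "ennreal (k s y z) = 1/2 * (indicator (B0 s) y + indicator (B1 s) y)" for y
    proof -
      have "k s y z = 1/2 * (indicator (B0 s) y + indicator (B1 s) y)" unfolding k_def using True by simp
      then have "ennreal (k s y z) = ennreal (1/2) * ennreal (indicator (B0 s) y + indicator (B1 s) y)"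
        by (simp only: ennreal_mult'[of "1/2"])
      also have "ennreal (indicator (B0 s) y + indicator (B1 s) y) = ennreal (indicator (B0 s) y) + ennreal (indicator (B1 s) y)"
        by (rule ennreal_plus) auto
      finally show ?thesis by (simp only: h ennreal_indicator)
    qed
    then have "(\<integral>\<^sup>+ y. ennreal (k s y z) \<partial>M s) = (\<integral>\<^sup>+ y. 1/2 * (indicator (B0 s) y + indicator (B1 s) y) \<partial>M s)"
      by simp
    also have "\<dots> = 1/2 * (1 + 1)" using B[OF s] by (simp add: nn_integral_cmult nn_integral_add)
    also have "\<dots> = 1" by (rule half_twice)
    finally show ?thesis .
  next
    case False
    then obtain D where "D = B0 s \<or> D = B1 s" "\<And>y. k s y z = indicator D y"
      unfolding k_def by (cases "s \<in> T"; cases "z (par s) \<in> B1 (par s)") auto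
    then show ?thesis using B[OF s] by (auto simp: ennreal_indicator)
  qed
  have kn: "\<forall>y z. 0 \<le> k s y z" for s unfolding k_def by auto
  have PinG: "P \<in> Pfam N E M"
    unfolding Pfam_def
    apply (rule CollectI, rule conjI[OF probP], rule exI[of _ k])
    using kmeas knorm kn by (auto simp: P_def)
  from PinG assms(4) have "P \<in> Pfam N E' M" by auto
  then obtain k' :: "'n \<Rightarrow> (nat \<Rightarrow> real) \<Rightarrow> ('n \<Rightarrow> nat \<Rightarrow> real) \<Rightarrow> real" where
    k'm: "\<And>s. s \<in> N \<Longrightarrow> (\<lambda>(y, z). k' s y z) \<in> borel_measurable (M s \<Otimes>\<^sub>M (\<Pi>\<^sub>M t\<in>pa E' s. M t))"
    and k'n: "\<And>s y z. s \<in> N \<Longrightarrow> 0 \<le> k' s y z"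
    and k'1: "\<And>s z. s \<in> N \<Longrightarrow> z \<in> space (\<Pi>\<^sub>M t\<in>pa E' s. M t) \<Longrightarrow> (\<integral>\<^sup>+ y. ennreal (k' s y z) \<partial>M s) = 1"
    and Peq: "P = density (\<Pi>\<^sub>M s\<in>N. M s) (\<lambda>x. ennreal (\<Prod>s\<in>N. k' s (x s) (restrict x (pa E' s))))"
    unfolding Pfam_def by blast
  show False
  proof (rule M2.core[where N=N and Pa="pa E'" and ord=O' and u=u and v=v and k="\<lambda>s y z. ennreal (k' s y z)" and C=C])
    show "finite N" "u \<in> N" "v \<in> N" "O' v < O' u" using finN assms by auto
    show "\<And>s. s \<in> N \<Longrightarrow> pa E' s \<subseteq> N" using pa'N by auto
    show "\<And>s t. s \<in> N \<Longrightarrow> t \<in> pa E' s \<Longrightarrow> O' t < O' s" using ordE' unfolding pa_def by auto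
    show "v \<notin> pa E' u" using vu unfolding pa_def by auto
    show "(\<lambda>(y, z). ennreal (k' s y z)) \<in> borel_measurable (M2 s \<Otimes>\<^sub>M PiM (pa E' s) M2)" if s: "s \<in> N" for s
    proof -
      have "(\<lambda>x. ennreal ((\<lambda>(y, z). k' s y z) x)) \<in> borel_measurable (M s \<Otimes>\<^sub>M PiM (pa E' s) M)"
        using measurable_compose[OF k'm[OF s] measurable_ennreal] .
      then show ?thesis using M2N[OF s] PiM2[OF pa'N] by (simp add: split_def)
    qed
    show "(\<integral>\<^sup>+ y. ennreal (k' s y z) \<partial>M2 s) = 1" if "s \<in> N" "z \<in> space (PiM (pa E' s) M2)" for s z
      using k'1[of s z] that M2N PiM2[OF pa'N] by simp
    show "C b s \<in> sets (M2 s)" "emeasure (M2 s) (C b s) = 1" if "s \<in> N" for b s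
      using Cs[OF that] M2N[OF that] by auto
    show "C False u \<inter> C True u = {}" "C False v \<inter> C True v = {}"
      using B(3) uT vT TN unfolding C_def by auto
    show "C True s = C False s" if "s \<in> N" "s \<noteq> u" "s \<noteq> v" "O' s \<le> O' u" for s
      using notT[OF that] unfolding C_def by auto
    have "(\<lambda>x. \<Prod>s\<in>N. ennreal (k' s (x s) (restrict x (pa E' s)))) = (\<lambda>x. ennreal (\<Prod>s\<in>N. k' s (x s) (restrict x (pa E' s))))"
      using k'n by (intro ext prod_ennreal) auto
    then show "density (PiM N M2) (\<lambda>x. \<Prod>s\<in>N. ennreal (k' s (x s) (restrict x (pa E' s))))
      = density (PiM N M2) (\<lambda>x. 1/2 * ((\<Prod>s\<in>N. indicator (C False s) (x s)) + (\<Prod>s\<in>N. indicator (C True s) (x s))))"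
      using Peq P_fe PiM2[OF order_refl] unfolding fe_def by simp
  qed
qed


end
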